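(* Let $G$ be a group, $N$ a normal subgroup, and $S=\bigoplus_{g\in G}S_g$ a nearly epsilon-strongly $G$-graded ring. Fix $C\in G/N$. For any positive integer $n$ and elements $s_{g_1},\dots,s_{g_n}$ with $s_{g_i}\in S_{g_i}$ and $g_i\in C$ for all $i$, there exists $e\in S_CS_{C^{-1}}$ with $es_{g_i}=s_{g_i}$ for all $1\le i\le n$, and there exists $e'\in S_{C^{-1}}S_C$ with $s_{g_i}e'=s_{g_i}$ for all $1\le i\le n$.
   Context: Rings are associative, not necessarily unital; $AB$ denotes finite sums of products. A $G$-grading: $S=\bigoplus_gS_g$, $S_gS_h\subseteq S_{gh}$. The grading is nearly epsilon-strong if $S_gS_{g^{-1}}S_g=S_g$ for all $g$ and each ring $S_gS_{g^{-1}}$ is $s$-unital ($x\in xR\cap Rx$ for all $x$ in the ring $R$); equivalently, for each $g$ and $s\in S_g$ there are $\epsilon\in S_gS_{g^{-1}}$ and $\epsilon'\in S_{g^{-1}}S_g$ with $\epsilon s=s=s\epsilon'$. Induced grading: $S_C=\bigoplus_{g\in C}S_g$. *)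

theory Defs
  imports "HOL-Algebra.Coset"
begin

text \<open>Rings are elements of the (associative, not necessarily unital) type class ring.
  The product AB of additive subsets is the set of finite sums of products.\<close>

definition setmul :: "'a::ring set \<Rightarrow> 'a set \<Rightarrow> 'a set" where
  "setmul A B = {x. \<exists>(n::nat) a b. (\<forall>i<n. a i \<in> A \<and> b i \<in> B) \<and> x = (\<Sum>i<n. a i * b i)}"

definition additive_subgroup :: "'a::ring set \<Rightarrow> bool" where
  "additive_subgroup A \<longleftrightarrow> 0 \<in> A \<and> (\<forall>x\<in>A. \<forall>y\<in>A. x + y \<in> A \<and> - x \<in> A)"

definition graded_ring :: "('g, 'b) monoid_scheme \<Rightarrow> ('g \<Rightarrow> 'a::ring set) \<Rightarrow> bool" where
  "graded_ring G S \<longleftrightarrow> group G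
    \<and> (\<forall>g\<in>carrier G. additive_subgroup (S g))
    \<and> (\<forall>g\<in>carrier G. \<forall>h\<in>carrier G. \<forall>x\<in>S g. \<forall>y\<in>S h. x * y \<in> S (g \<otimes>\<^bsub>G\<^esub> h))
    \<and> (\<forall>x. \<exists>f F. finite F \<and> F \<subseteq> carrier G \<and> (\<forall>g\<in>F. f g \<in> S g) \<and> x = sum f F)
    \<and> (\<forall>f F. finite F \<and> F \<subseteq> carrier G \<and> (\<forall>g\<in>F. f g \<in> S g) \<and> sum f F = 0
           \<longrightarrow> (\<forall>g\<in>F. f g = 0))"

definition s_unital :: "'a::ring set \<Rightarrow> bool" where
  "s_unital R \<longleftrightarrow> (\<forall>x\<in>R. (\<exists>r\<in>R. x = x * r) \<and> (\<exists>r\<in>R. x = r * x))"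

definition nearly_epsilon_strong :: "('g, 'b) monoid_scheme \<Rightarrow> ('g \<Rightarrow> 'a::ring set) \<Rightarrow> bool" where
  "nearly_epsilon_strong G S \<longleftrightarrow> graded_ring G S
    \<and> (\<forall>g\<in>carrier G. setmul (setmul (S g) (S (inv\<^bsub>G\<^esub> g))) (S g) = S g
        \<and> s_unital (setmul (S g) (S (inv\<^bsub>G\<^esub> g))))"

definition induced_comp :: "('g \<Rightarrow> 'a::ring set) \<Rightarrow> 'g set \<Rightarrow> 'a set" where
  "induced_comp S C = {x. \<exists>f F. finite F \<and> F \<subseteq> C \<and> (\<forall>g\<in>F. f g \<in> S g) \<and> x = sum f F}"

end

theory Submission
  imports Defs
begin

lemma setmul_zero: "0 \<in> setmul A B"
  unfolding setmul_def by (rule CollectI, rule exI[of _ 0]) auto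

lemma setmul_cons:
  assumes "a0 \<in> A" "b0 \<in> B" "x \<in> setmul A B"
  shows "a0 * b0 + x \<in> setmul A B"
proof -
  obtain n :: nat and a b where ab: "\<forall>i<n. a i \<in> A \<and> b i \<in> B" "x = (\<Sum>i<n. a i * b i)"
    using assms(3) unfolding setmul_def by blast
  define a' where "a' = a(n := a0)"
  define b' where "b' = b(n := b0)"
  have "(\<Sum>i<Suc n. a' i * b' i) = (\<Sum>i<n. a' i * b' i) + a0 * b0"
    by (simp add: a'_def b'_def)
  also have "(\<Sum>i<n. a' i * b' i) = x"
    unfolding ab(2) by (rule sum.cong) (auto simp: a'_def b'_def)
  finally have e: "a0 * b0 + x = (\<Sum>i<Suc n. a' i * b' i)" by (simp add: add.commute)
  have "\<forall>i<Suc n. a' i \<in> A \<and> b' i \<in> B"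
    using ab(1) assms(1,2) by (auto simp: a'_def b'_def less_Suc_eq)
  with e show ?thesis unfolding setmul_def by blast
qed

lemma setmul_induct[consumes 1, case_names zero step]:
  assumes "x \<in> setmul A B" "P 0"
    "\<And>a b y. a \<in> A \<Longrightarrow> b \<in> B \<Longrightarrow> P y \<Longrightarrow> P (a * b + y)"
  shows "P x"
proof -
  obtain n :: nat and a b where ab: "\<forall>i<n. a i \<in> A \<and> b i \<in> B" "x = (\<Sum>i<n. a i * b i)"
    using assms(1) unfolding setmul_def by blast
  have "\<forall>i<n. a i \<in> A \<and> b i \<in> B \<Longrightarrow> P (\<Sum>i<n. a i * b i)" for n
  proof (induction n)
    case 0 then show ?case using assms(2) by simp
  next
    case (Suc n)
    then have "P (a n * b n + (\<Sum>i<n. a i * b i))" using assms(3) by auto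
    then show ?case by (simp add: add.commute)
  qed
  with ab show ?thesis by blast
qed

lemma setmul_prod: "a \<in> A \<Longrightarrow> b \<in> B \<Longrightarrow> a * b \<in> setmul A B"
  using setmul_cons[OF _ _ setmul_zero] by fastforce

lemma setmul_add: "x \<in> setmul A B \<Longrightarrow> y \<in> setmul A B \<Longrightarrow> x + y \<in> setmul A B"
proof (induction x rule: setmul_induct)
  case zero then show ?case by simp
next
  case (step a b z)
  then show ?case using setmul_cons[of a A b B "z + y"] by (simp add: add.assoc)
qed

lemma setmul_neg:
  assumes "\<forall>a\<in>A. - a \<in> A" "x \<in> setmul A B" shows "- x \<in> setmul A B"
  using assms(2)
proof (induction x rule: setmul_induct)
  case zero then show ?case by (simp add: setmul_zero)
next
  case (step a b z)
  have "- (a * b + z) = (- a) * b + (- z)" by simp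
  then show ?case using setmul_cons[of "-a" A b B "- z"] step assms(1) by simp
qed

lemma setmul_diff:
  assumes "\<forall>a\<in>A. - a \<in> A" "x \<in> setmul A B" "y \<in> setmul A B" shows "x - y \<in> setmul A B"
  using setmul_add[OF assms(2) setmul_neg[OF assms(1,3)]] by simp

lemma setmul_rmult:
  assumes "x \<in> setmul A B" "\<forall>b\<in>B. b * c \<in> B'" shows "x * c \<in> setmul A B'"
  using assms(1)
proof (induction x rule: setmul_induct)
  case zero then show ?case by (simp add: setmul_zero)
next
  case (step a b z)
  have "(a * b + z) * c = a * (b * c) + z * c" by (simp add: algebra_simps)
  then show ?case using setmul_cons[of a A "b * c" B' "z * c"] step assms(2) by simp
qed

lemma setmul_lmult:
  assumes "x \<in> setmul A B" "\<forall>a\<in>A. c * a \<in> A'" shows "c * x \<in> setmul A' B"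
  using assms(1)
proof (induction x rule: setmul_induct)
  case zero then show ?case by (simp add: setmul_zero)
next
  case (step a b z)
  have "c * (a * b + z) = (c * a) * b + c * z" by (simp add: algebra_simps)
  then show ?case using setmul_cons[of "c * a" A' b B "c * z"] step assms(2) by simp
qed

lemma setmul_mono:
  assumes "A \<subseteq> A'" "B \<subseteq> B'" "x \<in> setmul A B" shows "x \<in> setmul A' B'"
  using assms(3)
proof (induction x rule: setmul_induct)
  case zero then show ?case by (simp add: setmul_zero)
next
  case (step a b z)
  then show ?case using setmul_cons[of a A' b B' z] assms by auto
qed

lemma setmul_assoc:
  assumes "x \<in> setmul (setmul A B) C" shows "x \<in> setmul A (setmul B C)"
  using assms
proof (induction x rule: setmul_induct)
  case zero then show ?case by (simp add: setmul_zero)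
next
  case (step r c z)
  have "r * c \<in> setmul A (setmul B C)"
    using setmul_rmult[OF step(1), of c "setmul B C"] step(2) setmul_prod by blast
  then show ?case using setmul_add step by blast
qed

lemma setmul_sub:
  assumes "additive_subgroup H" "\<forall>a\<in>A. \<forall>b\<in>B. a * b \<in> H" "x \<in> setmul A B"
  shows "x \<in> H"
  using assms(3)
proof (induction x rule: setmul_induct)
  case zero then show ?case using assms(1) by (simp add: additive_subgroup_def)
next
  case (step a b z)
  then show ?case using assms unfolding additive_subgroup_def by blast
qed

lemma left_units:
  fixes x :: "'i \<Rightarrow> 'a::ring"
  assumes "finite I" "\<forall>i\<in>I. x i \<in> T" "\<forall>y\<in>T. \<exists>v\<in>R. v * y = y"
    "\<forall>v\<in>R. \<forall>y\<in>T. y - v * y \<in> T" "\<forall>v\<in>R. \<forall>w\<in>R. v + w - w * v \<in> R" "0 \<in> R"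
  shows "\<exists>u\<in>R. \<forall>i\<in>I. u * x i = x i"
  using assms(1,2)
proof (induction I arbitrary: x rule: finite_induct)
  case empty then show ?case using assms(6) by blast
next
  case (insert j I)
  obtain v where v: "v \<in> R" "v * x j = x j" using insert.prems assms(3) by blast
  define y where "y i = x i - v * x i" for i
  have "\<forall>i\<in>I. y i \<in> T" using insert.prems assms(4) v(1) by (simp add: y_def)
  then obtain w where w: "w \<in> R" "\<forall>i\<in>I. w * y i = y i" using insert.IH by blast
  define u where "u = v + w - w * v"
  have "u \<in> R" using assms(5) v(1) w(1) by (simp add: u_def)
  moreover have "u * x j = x j"
    unfolding u_def by (simp add: algebra_simps mult.assoc v(2))
  moreover have "u * x i = x i" if "i \<in> I" for i
  proof -
    have "w * (x i - v * x i) = x i - v * x i" using w(2) that by (simp add: y_def)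
    then show ?thesis unfolding u_def by (simp add: algebra_simps mult.assoc)
  qed
  ultimately show ?case by blast
qed

lemma right_units:
  fixes x :: "'i \<Rightarrow> 'a::ring"
  assumes "finite I" "\<forall>i\<in>I. x i \<in> T" "\<forall>y\<in>T. \<exists>v\<in>R. y * v = y"
    "\<forall>v\<in>R. \<forall>y\<in>T. y - y * v \<in> T" "\<forall>v\<in>R. \<forall>w\<in>R. v + w - v * w \<in> R" "0 \<in> R"
  shows "\<exists>u\<in>R. \<forall>i\<in>I. x i * u = x i"
  using assms(1,2)
proof (induction I arbitrary: x rule: finite_induct)
  case empty then show ?case using assms(6) by blast
next
  case (insert j I)
  obtain v where v: "v \<in> R" "x j * v = x j" using insert.prems assms(3) by blast
  define y where "y i = x i - x i * v" for i
  have "\<forall>i\<in>I. y i \<in> T" using insert.prems assms(4) v(1) by (simp add: y_def)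
  then obtain w where w: "w \<in> R" "\<forall>i\<in>I. y i * w = y i" using insert.IH by blast
  define u where "u = v + w - v * w"
  have "u \<in> R" using assms(5) v(1) w(1) by (simp add: u_def)
  moreover have "x j * u = x j"
  proof -
    have "x j * u = x j * v + x j * w - (x j * v) * w" by (simp add: u_def algebra_simps)
    then show ?thesis using v(2) by simp
  qed
  moreover have "x i * u = x i" if "i \<in> I" for i
  proof -
    have "(x i - x i * v) * w = x i - x i * v" using w(2) that by (simp add: y_def)
    moreover have "x i * u = x i * v + (x i - x i * v) * w" by (simp add: u_def algebra_simps)
    ultimately show ?thesis by simp
  qed
  ultimately show ?case by blast
qed



lemma addsub_diff: "additive_subgroup H \<Longrightarrow> x \<in> H \<Longrightarrow> y \<in> H \<Longrightarrow> x - y \<in> H"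
  unfolding additive_subgroup_def by (metis diff_conv_add_uminus)

lemma addsub_add: "additive_subgroup H \<Longrightarrow> x \<in> H \<Longrightarrow> y \<in> H \<Longrightarrow> x + y \<in> H"
  unfolding additive_subgroup_def by blast

lemma addsub_neg: "additive_subgroup H \<Longrightarrow> x \<in> H \<Longrightarrow> - x \<in> H"
  unfolding additive_subgroup_def by blast

lemma addsub_zero: "additive_subgroup H \<Longrightarrow> 0 \<in> H"
  unfolding additive_subgroup_def by blast

lemma gr_group: "graded_ring G S \<Longrightarrow> group G"
  unfolding graded_ring_def by (elim conjE)

lemma gr_sub: "graded_ring G S \<Longrightarrow> g \<in> carrier G \<Longrightarrow> additive_subgroup (S g)"
  unfolding graded_ring_def by (elim conjE) simp

lemma gr_mult: "graded_ring G S \<Longrightarrow> g \<in> carrier G \<Longrightarrow> h \<in> carrier G \<Longrightarrow> x \<in> S g \<Longrightarrow> y \<in> S h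
   \<Longrightarrow> x * y \<in> S (g \<otimes>\<^bsub>G\<^esub> h)"
  unfolding graded_ring_def by (elim conjE) simp

lemma gr_setmul:
  assumes "graded_ring G S" "g \<in> carrier G" "h \<in> carrier G"
  shows "setmul (S g) (S h) \<subseteq> S (g \<otimes>\<^bsub>G\<^esub> h)"
proof
  fix x assume "x \<in> setmul (S g) (S h)"
  moreover have "additive_subgroup (S (g \<otimes>\<^bsub>G\<^esub> h))"
    using gr_sub[OF assms(1)] monoid.m_closed[OF group.is_monoid[OF gr_group[OF assms(1)]] assms(2,3)]
    by blast
  moreover have "\<forall>a\<in>S g. \<forall>b\<in>S h. a * b \<in> S (g \<otimes>\<^bsub>G\<^esub> h)"
    using gr_mult[OF assms] by blast
  ultimately show "x \<in> S (g \<otimes>\<^bsub>G\<^esub> h)" using setmul_sub by blast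
qed

lemma R_ring:
  assumes gr: "graded_ring G S" and g: "g \<in> carrier G" and h: "h \<in> carrier G"
    and gh: "g \<otimes>\<^bsub>G\<^esub> h = \<one>\<^bsub>G\<^esub>"
  defines "R \<equiv> setmul (S g) (S h)"
  shows "R \<subseteq> S \<one>\<^bsub>G\<^esub>" "0 \<in> R"
    "\<forall>v\<in>R. \<forall>y\<in>R. v * y \<in> R" "\<forall>v\<in>R. \<forall>y\<in>R. v + y \<in> R" "\<forall>v\<in>R. \<forall>y\<in>R. v - y \<in> R"
proof -
  have grp: "group G" using gr_group[OF gr] .
  show RE: "R \<subseteq> S \<one>\<^bsub>G\<^esub>" unfolding R_def using gr_setmul[OF gr g h] unfolding gh .
  show "0 \<in> R" by (simp add: R_def setmul_zero)
  show "\<forall>v\<in>R. \<forall>y\<in>R. v * y \<in> R"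
  proof (intro ballI)
    fix v y assume v: "v \<in> R" and y: "y \<in> R"
    have "\<forall>b\<in>S h. b * y \<in> S h"
    proof
      fix b assume "b \<in> S h"
      moreover have "y \<in> S \<one>\<^bsub>G\<^esub>" using y RE by blast
      ultimately have "b * y \<in> S (h \<otimes>\<^bsub>G\<^esub> \<one>\<^bsub>G\<^esub>)"
        using gr_mult[OF gr h monoid.one_closed[OF group.is_monoid[OF grp]]] by blast
      then show "b * y \<in> S h" using monoid.r_one[OF group.is_monoid[OF grp] h] by simp
    qed
    then show "v * y \<in> R" using setmul_rmult v unfolding R_def by blast
  qed
  show "\<forall>v\<in>R. \<forall>y\<in>R. v + y \<in> R" unfolding R_def by (blast intro: setmul_add)
  show "\<forall>v\<in>R. \<forall>y\<in>R. v - y \<in> R"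
  proof (intro ballI)
    fix v y assume "v \<in> R" "y \<in> R"
    then show "v - y \<in> R" unfolding R_def
      by (intro setmul_diff) (auto intro: addsub_neg[OF gr_sub[OF gr g]])
  qed
qed

lemma ne_gr: "nearly_epsilon_strong G S \<Longrightarrow> graded_ring G S"
  unfolding nearly_epsilon_strong_def by (elim conjE)

lemma ne_eq: "nearly_epsilon_strong G S \<Longrightarrow> g \<in> carrier G \<Longrightarrow>
   setmul (setmul (S g) (S (inv\<^bsub>G\<^esub> g))) (S g) = S g"
  unfolding nearly_epsilon_strong_def by (elim conjE) simp

lemma ne_su: "nearly_epsilon_strong G S \<Longrightarrow> g \<in> carrier G \<Longrightarrow>
   s_unital (setmul (S g) (S (inv\<^bsub>G\<^esub> g)))"
  unfolding nearly_epsilon_strong_def by (elim conjE) simp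

lemma deg_units:
  assumes ne: "nearly_epsilon_strong G S" and g: "g \<in> carrier G" and x: "x \<in> S g"
  shows "\<exists>v\<in>setmul (S g) (S (inv\<^bsub>G\<^esub> g)). v * x = x \<and> v \<in> S \<one>\<^bsub>G\<^esub>"
    and "\<exists>v\<in>setmul (S (inv\<^bsub>G\<^esub> g)) (S g). x * v = x \<and> v \<in> S \<one>\<^bsub>G\<^esub>"
proof -
  have gr: "graded_ring G S" using ne_gr[OF ne] .
  have grp: "group G" using gr_group[OF gr] .
  have ig: "inv\<^bsub>G\<^esub> g \<in> carrier G" using grp g by simp
  have iig: "inv\<^bsub>G\<^esub> (inv\<^bsub>G\<^esub> g) = g" using grp g by simp
  define R where "R = setmul (S g) (S (inv\<^bsub>G\<^esub> g))"
  define R' where "R' = setmul (S (inv\<^bsub>G\<^esub> g)) (S g)"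
  have eq: "setmul R (S g) = S g" and su: "s_unital R"
    using ne_eq[OF ne g] ne_su[OF ne g] unfolding R_def by auto
  have su': "s_unital R'"
  proof -
    have "s_unital (setmul (S (inv\<^bsub>G\<^esub> g)) (S (inv\<^bsub>G\<^esub> (inv\<^bsub>G\<^esub> g))))"
      using ne_su[OF ne ig] .
    then show ?thesis unfolding R'_def iig .
  qed
  note RR = R_ring[OF gr g ig, folded R_def] and RR' = R_ring[OF gr ig g, folded R'_def]
  have gi: "g \<otimes>\<^bsub>G\<^esub> inv\<^bsub>G\<^esub> g = \<one>\<^bsub>G\<^esub>" "inv\<^bsub>G\<^esub> g \<otimes>\<^bsub>G\<^esub> g = \<one>\<^bsub>G\<^esub>"
    using group.r_inv[OF grp g] group.l_inv[OF grp g] by simp_all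
  note RR = RR[OF gi(1)] and RR' = RR'[OF gi(2)]
  obtain n :: nat and a b where ab: "\<forall>i<n. a i \<in> R \<and> b i \<in> S g" "x = (\<Sum>i<n. a i * b i)"
    using x eq unfolding setmul_def by blast
  have "\<exists>u\<in>R. \<forall>i\<in>{..<n}. u * a i = a i"
  proof (rule left_units[where T = R])
    show "\<forall>y\<in>R. \<exists>v\<in>R. v * y = y"
    proof
      fix y assume "y \<in> R"
      then obtain r where "r \<in> R" "y = r * y" using su unfolding s_unital_def by blast
      then show "\<exists>v\<in>R. v * y = y" by (metis)
    qed
    show "finite {..<n}" by simp
    show "\<forall>i\<in>{..<n}. a i \<in> R" using ab(1) by simp
    show "\<forall>v\<in>R. \<forall>y\<in>R. y - v * y \<in> R"
    proof (intro ballI)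
      fix v y assume "v \<in> R" "y \<in> R"
      then show "y - v * y \<in> R" using RR(3) RR(5) by blast
    qed
    show "\<forall>v\<in>R. \<forall>w\<in>R. v + w - w * v \<in> R"
    proof (intro ballI)
      fix v w assume "v \<in> R" "w \<in> R"
      then show "v + w - w * v \<in> R" using RR(3) RR(4) RR(5) by meson
    qed
    show "0 \<in> R" using RR(2) .
  qed
  then obtain u where u: "u \<in> R" "\<forall>i<n. u * a i = a i" by auto
  have "u * x = x" unfolding ab(2) sum_distrib_left
    by (rule sum.cong) (auto simp: mult.assoc[symmetric] u(2))
  then show "\<exists>v\<in>setmul (S g) (S (inv\<^bsub>G\<^esub> g)). v * x = x \<and> v \<in> S \<one>\<^bsub>G\<^esub>"
    using u(1) RR(1) R_def by blast
  have "x \<in> setmul (setmul (S g) (S (inv\<^bsub>G\<^esub> g))) (S g)" using x eq unfolding R_def by simp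
  then have "x \<in> setmul (S g) R'" unfolding R'_def by (rule setmul_assoc)
  then obtain m :: nat and c d where cd: "\<forall>i<m. c i \<in> S g \<and> d i \<in> R'" "x = (\<Sum>i<m. c i * d i)"
    unfolding setmul_def by blast
  have "\<exists>u\<in>R'. \<forall>i\<in>{..<m}. d i * u = d i"
  proof (rule right_units[where T = R'])
    show "\<forall>y\<in>R'. \<exists>v\<in>R'. y * v = y"
    proof
      fix y assume "y \<in> R'"
      then obtain r where "r \<in> R'" "y = y * r" using su' unfolding s_unital_def by blast
      then show "\<exists>v\<in>R'. y * v = y" by (metis)
    qed
    show "finite {..<m}" by simp
    show "\<forall>i\<in>{..<m}. d i \<in> R'" using cd(1) by simp
    show "\<forall>v\<in>R'. \<forall>y\<in>R'. y - y * v \<in> R'"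
    proof (intro ballI)
      fix v y assume "v \<in> R'" "y \<in> R'"
      then show "y - y * v \<in> R'" using RR'(3) RR'(5) by blast
    qed
    show "\<forall>v\<in>R'. \<forall>w\<in>R'. v + w - v * w \<in> R'"
    proof (intro ballI)
      fix v w assume "v \<in> R'" "w \<in> R'"
      then show "v + w - v * w \<in> R'" using RR'(3) RR'(4) RR'(5) by meson
    qed
    show "0 \<in> R'" using RR'(2) .
  qed
  then obtain u' where u': "u' \<in> R'" "\<forall>i<m. d i * u' = d i" by auto
  have "x * u' = x" unfolding cd(2) sum_distrib_right
    by (rule sum.cong) (auto simp: mult.assoc u'(2))
  then show "\<exists>v\<in>setmul (S (inv\<^bsub>G\<^esub> g)) (S g). x * v = x \<and> v \<in> S \<one>\<^bsub>G\<^esub>"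
    using u'(1) RR'(1) R'_def by blast
qed


lemma ind_sub: "g \<in> C \<Longrightarrow> x \<in> S g \<Longrightarrow> x \<in> induced_comp S C"
  unfolding induced_comp_def
  by (rule CollectI, rule exI[of _ "\<lambda>_. x"], rule exI[of _ "{g}"]) simp

lemma ind_neg:
  assumes gr: "graded_ring G S" and D: "D \<subseteq> carrier G" and x: "x \<in> induced_comp S D"
  shows "- x \<in> induced_comp S D"
proof -
  obtain f F where fF: "finite F" "F \<subseteq> D" "\<forall>g\<in>F. f g \<in> S g" "x = sum f F"
    using x unfolding induced_comp_def by (auto simp only: mem_Collect_eq)
  have "\<forall>g\<in>F. - f g \<in> S g" using fF D addsub_neg[OF gr_sub[OF gr]] by blast
  moreover have "- x = sum (\<lambda>g. - f g) F" using fF(4) by (simp add: sum_negf)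
  ultimately show ?thesis unfolding induced_comp_def
    by (intro CollectI exI[of _ "\<lambda>g. - f g"] exI[of _ F] conjI) (use fF in auto)
qed

lemma ind_rmult:
  assumes gr: "graded_ring G S" and D: "D \<subseteq> carrier G" and x: "x \<in> induced_comp S D"
    and v: "v \<in> S \<one>\<^bsub>G\<^esub>"
  shows "x * v \<in> induced_comp S D"
proof -
  have M: "monoid G" using group.is_monoid[OF gr_group[OF gr]] .
  obtain f F where fF: "finite F" "F \<subseteq> D" "\<forall>g\<in>F. f g \<in> S g" "x = sum f F"
    using x unfolding induced_comp_def by (auto simp only: mem_Collect_eq)
  have "\<forall>g\<in>F. f g * v \<in> S g"
  proof
    fix g assume g: "g \<in> F"
    then have gc: "g \<in> carrier G" using fF D by blast
    have "f g * v \<in> S (g \<otimes>\<^bsub>G\<^esub> \<one>\<^bsub>G\<^esub>)"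
      using gr_mult[OF gr gc monoid.one_closed[OF M]] fF(3) g v by blast
    then show "f g * v \<in> S g" using monoid.r_one[OF M gc] by simp
  qed
  moreover have "x * v = sum (\<lambda>g. f g * v) F" using fF(4) by (simp add: sum_distrib_right)
  ultimately show ?thesis unfolding induced_comp_def
    by (intro CollectI exI[of _ "\<lambda>g. f g * v"] exI[of _ F] conjI) (use fF in auto)
qed

lemma ind_lmult:
  assumes gr: "graded_ring G S" and D: "D \<subseteq> carrier G" and x: "x \<in> induced_comp S D"
    and v: "v \<in> S \<one>\<^bsub>G\<^esub>"
  shows "v * x \<in> induced_comp S D"
proof -
  have M: "monoid G" using group.is_monoid[OF gr_group[OF gr]] .
  obtain f F where fF: "finite F" "F \<subseteq> D" "\<forall>g\<in>F. f g \<in> S g" "x = sum f F"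
    using x unfolding induced_comp_def by (auto simp only: mem_Collect_eq)
  have "\<forall>g\<in>F. v * f g \<in> S g"
  proof
    fix g assume g: "g \<in> F"
    then have gc: "g \<in> carrier G" using fF D by blast
    have "v * f g \<in> S (\<one>\<^bsub>G\<^esub> \<otimes>\<^bsub>G\<^esub> g)"
      using gr_mult[OF gr monoid.one_closed[OF M] gc] fF(3) g v by blast
    then show "v * f g \<in> S g" using monoid.l_one[OF M gc] by simp
  qed
  moreover have "v * x = sum (\<lambda>g. v * f g) F" using fF(4) by (simp add: sum_distrib_left)
  ultimately show ?thesis unfolding induced_comp_def
    by (intro CollectI exI[of _ "\<lambda>g. v * f g"] exI[of _ F] conjI) (use fF in auto)
qed

theorem lemma5p7:
  fixes G (structure) and N :: "'g set" and S :: "'g \<Rightarrow> 'a::ring set"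
    and C :: "'g set" and n :: nat and g :: "nat \<Rightarrow> 'g" and s :: "nat \<Rightarrow> 'a"
  assumes "group G"
    and "N \<lhd> G"
    and "nearly_epsilon_strong G S"
    and "C \<in> rcosets N"
    and "n \<ge> 1"
    and "\<forall>i\<in>{1..n}. g i \<in> C \<and> s i \<in> S (g i)"
  shows "(\<exists>e\<in>setmul (induced_comp S C) (induced_comp S (set_inv C)). \<forall>i\<in>{1..n}. e * s i = s i)
       \<and> (\<exists>e'\<in>setmul (induced_comp S (set_inv C)) (induced_comp S C). \<forall>i\<in>{1..n}. s i * e' = s i)"
proof -
  note ne = assms(3)
  have gr: "graded_ring G S" using ne_gr[OF ne] .
  have grp: "group G" using assms(1) .
  have M: "monoid G" using group.is_monoid[OF grp] .
  have Cc: "C \<subseteq> carrier G"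
    using subgroup.rcosets_carrier[OF normal_imp_subgroup[OF assms(2)] grp assms(4)] .
  have iCc: "set_inv C \<subseteq> carrier G"
  proof
    fix x assume "x \<in> set_inv C"
    then obtain h where "h \<in> C" "x = inv h" unfolding SET_INV_def by blast
    then show "x \<in> carrier G" using Cc group.inv_closed[OF grp] by blast
  qed
  define A where "A = induced_comp S C"
  define B where "B = induced_comp S (set_inv C)"
  define E where "E = S \<one>"
  have E: "additive_subgroup E" unfolding E_def using gr_sub[OF gr monoid.one_closed[OF M]] .
  have EE: "v * w \<in> E" if "v \<in> E" "w \<in> E" for v w
  proof -
    have "v * w \<in> S (\<one> \<otimes> \<one>)"
      using gr_mult[OF gr monoid.one_closed[OF M] monoid.one_closed[OF M]] that unfolding E_def by blast
    then show ?thesis unfolding E_def using monoid.l_one[OF M monoid.one_closed[OF M]] by simp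
  qed
  have Aneg: "\<forall>a\<in>A. - a \<in> A" unfolding A_def using ind_neg[OF gr Cc] by blast
  have Bneg: "\<forall>a\<in>B. - a \<in> B" unfolding B_def using ind_neg[OF gr iCc] by blast
  define T where "T = {y. \<exists>h\<in>C. y \<in> S h}"
  have sT: "\<forall>i\<in>{1..n}. s i \<in> T" unfolding T_def using assms(6) by blast
  have SgA: "S h \<subseteq> A" if "h \<in> C" for h unfolding A_def using ind_sub[OF that] by blast
  have SgB: "S (inv h) \<subseteq> B" if "h \<in> C" for h
  proof -
    have "inv h \<in> set_inv C" using that unfolding SET_INV_def by blast
    then show ?thesis unfolding B_def using ind_sub[of "inv h" "set_inv C" _ S] by blast
  qed
  have left: "\<exists>u\<in>setmul A B \<inter> E. \<forall>i\<in>{1..n}. u * s i = s i"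
  proof (rule left_units[where T = T])
    show "\<forall>y\<in>T. \<exists>v\<in>setmul A B \<inter> E. v * y = y"
    proof
      fix y assume "y \<in> T"
      then obtain h where h: "h \<in> C" "y \<in> S h" unfolding T_def by blast
      obtain v where v: "v \<in> setmul (S h) (S (inv h))" "v * y = y" "v \<in> E"
        using deg_units(1)[OF ne _ h(2)] h(1) Cc E_def by blast
      have "v \<in> setmul A B" using setmul_mono[OF SgA[OF h(1)] SgB[OF h(1)] v(1)] .
      then show "\<exists>v\<in>setmul A B \<inter> E. v * y = y" using v by blast
    qed
    show "\<forall>v\<in>setmul A B \<inter> E. \<forall>y\<in>T. y - v * y \<in> T"
    proof (intro ballI)
      fix v y assume v: "v \<in> setmul A B \<inter> E" and "y \<in> T"
      then obtain h where h: "h \<in> C" "y \<in> S h" unfolding T_def by blast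
      have hc: "h \<in> carrier G" using h Cc by blast
      have "v * y \<in> S (\<one> \<otimes> h)"
        using gr_mult[OF gr monoid.one_closed[OF M] hc] v h E_def by blast
      then have "v * y \<in> S h" using monoid.l_one[OF M hc] by simp
      then have "y - v * y \<in> S h" using addsub_diff[OF gr_sub[OF gr hc]] h by blast
      then show "y - v * y \<in> T" using h T_def by blast
    qed
    show "\<forall>v\<in>setmul A B \<inter> E. \<forall>w\<in>setmul A B \<inter> E. v + w - w * v \<in> setmul A B \<inter> E"
    proof (intro ballI)
      fix v w assume v: "v \<in> setmul A B \<inter> E" and w: "w \<in> setmul A B \<inter> E"
      have vE: "v \<in> S \<one>" using v E_def by simp
      have "\<forall>b\<in>B. b * v \<in> B" unfolding B_def using ind_rmult[OF gr iCc _ vE] by blast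
      then have "w * v \<in> setmul A B" using setmul_rmult[of w A B v B] w by blast
      then have "v + w - w * v \<in> setmul A B"
        using setmul_add[of v A B w] setmul_diff[OF Aneg, of "v + w" B "w * v"] v w by simp
      moreover have "v + w - w * v \<in> E"
        using addsub_diff[OF E addsub_add[OF E] EE, of v w w v] v w by simp
      ultimately show "v + w - w * v \<in> setmul A B \<inter> E" by blast
    qed
    show "0 \<in> setmul A B \<inter> E" using setmul_zero addsub_zero[OF E] by blast
  qed (use sT in auto)
  have right: "\<exists>u\<in>setmul B A \<inter> E. \<forall>i\<in>{1..n}. s i * u = s i"
  proof (rule right_units[where T = T])
    show "\<forall>y\<in>T. \<exists>v\<in>setmul B A \<inter> E. y * v = y"
    proof
      fix y assume "y \<in> T"
      then obtain h where h: "h \<in> C" "y \<in> S h" unfolding T_def by blast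
      obtain v where v: "v \<in> setmul (S (inv h)) (S h)" "y * v = y" "v \<in> E"
        using deg_units(2)[OF ne _ h(2)] h(1) Cc E_def by blast
      have "v \<in> setmul B A" using setmul_mono[OF SgB[OF h(1)] SgA[OF h(1)] v(1)] .
      then show "\<exists>v\<in>setmul B A \<inter> E. y * v = y" using v by blast
    qed
    show "\<forall>v\<in>setmul B A \<inter> E. \<forall>y\<in>T. y - y * v \<in> T"
    proof (intro ballI)
      fix v y assume v: "v \<in> setmul B A \<inter> E" and "y \<in> T"
      then obtain h where h: "h \<in> C" "y \<in> S h" unfolding T_def by blast
      have hc: "h \<in> carrier G" using h Cc by blast
      have "y * v \<in> S (h \<otimes> \<one>)"
        using gr_mult[OF gr hc monoid.one_closed[OF M]] v h E_def by blast
      then have "y * v \<in> S h" using monoid.r_one[OF M hc] by simp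
      then have "y - y * v \<in> S h" using addsub_diff[OF gr_sub[OF gr hc]] h by blast
      then show "y - y * v \<in> T" using h T_def by blast
    qed
    show "\<forall>v\<in>setmul B A \<inter> E. \<forall>w\<in>setmul B A \<inter> E. v + w - v * w \<in> setmul B A \<inter> E"
    proof (intro ballI)
      fix v w assume v: "v \<in> setmul B A \<inter> E" and w: "w \<in> setmul B A \<inter> E"
      have vE: "v \<in> S \<one>" using v E_def by simp
      have "\<forall>b\<in>B. v * b \<in> B" unfolding B_def using ind_lmult[OF gr iCc _ vE] by blast
      then have "v * w \<in> setmul B A" using setmul_lmult[of w B A v B] w by blast
      then have "v + w - v * w \<in> setmul B A"
        using setmul_add[of v B A w] setmul_diff[OF Bneg, of "v + w" A "v * w"] v w by simp
      moreover have "v + w - v * w \<in> E"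
        using addsub_diff[OF E addsub_add[OF E] EE, of v w v w] v w by simp
      ultimately show "v + w - v * w \<in> setmul B A \<inter> E" by blast
    qed
    show "0 \<in> setmul B A \<inter> E" using setmul_zero addsub_zero[OF E] by blast
  qed (use sT in auto)
  show ?thesis
  proof
    from left obtain u where "u \<in> setmul A B" "\<forall>i\<in>{1..n}. u * s i = s i" by blast
    then show "\<exists>e\<in>setmul (induced_comp S C) (induced_comp S (set_inv C)). \<forall>i\<in>{1..n}. e * s i = s i"
      unfolding A_def B_def by blast
    from right obtain u' where "u' \<in> setmul B A" "\<forall>i\<in>{1..n}. s i * u' = s i" by blast
    then show "\<exists>e'\<in>setmul (induced_comp S (set_inv C)) (induced_comp S C). \<forall>i\<in>{1..n}. s i * e' = s i"
      unfolding A_def B_def by blast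
  qed
qed

end
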